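(* Let $D$ be a weak bialgebra in $\mathcal C$ which is a weak crossed biproduct of a coalgebra $C$ and a weak Hopf algebra $B$ (playing the role of the algebra $A$), with preunit $\nu$, precounit $\upsilon$, associated idempotent $\nabla_{C\otimes B}$, coproduct $\delta_{C\otimes B}$ and morphism $\tau_B^C:C\otimes B\rightarrow B\otimes B$. Let $\beta_\nu=(C\otimes\mu_B)\circ(\nu\otimes B)$. If $\delta_{C\otimes B}\circ\beta_\nu=(\beta_\nu\otimes\beta_\nu)\circ\delta_B$, $\tau_B^C=(\varepsilon_C\otimes\delta_B)\circ\nabla_{C\otimes B}$ and $\upsilon=(\varepsilon_C\otimes\varepsilon_B)\circ\nabla_{C\otimes B}$, then there exist morphisms $f:B\rightarrow D$ and $g:D\rightarrow B$ such that $(D,B,f,g)$ is a weak bialgebra with a weak projection.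
   Context: $\mathcal C$ is a strict braided monoidal category with tensor product $\otimes$, unit object $K$ and braiding $c$, in which every idempotent splits. Algebras have unit $\eta$, product $\mu$; coalgebras counit $\varepsilon$, coproduct $\delta$; $f\wedge g=\mu\circ(f\otimes g)\circ\delta$. Weak bialgebra: algebra and coalgebra $D$ with $\delta_D\circ\mu_D=(\mu_D\otimes\mu_D)\circ(D\otimes c_{D,D}\otimes D)\circ(\delta_D\otimes\delta_D)$; $\varepsilon_D\circ\mu_D\circ(\mu_D\otimes D)=((\varepsilon_D\circ\mu_D)\otimes(\varepsilon_D\circ\mu_D))\circ(D\otimes\delta_D\otimes D)=((\varepsilon_D\circ\mu_D)\otimes(\varepsilon_D\circ\mu_D))\circ(D\otimes(c_{D,D}^{-1}\circ\delta_D)\otimes D)$; $(\delta_D\otimes D)\circ\delta_D\circ\eta_D=(D\otimes\mu_D\otimes D)\circ((\delta_D\circ\eta_D)\otimes(\delta_D\circ\eta_D))=(D\otimes(\mu_D\circ c_{D,D}^{-1})\otimes D)\circ((\delta_D\circ\eta_D)\otimes(\delta_D\circ\eta_D))$. Weak Hopf algebra: additionally an antipode $\lambda_D$ with $id_D\wedge\lambda_D=\Pi_D^L$, $\lambda_D\wedge id_D=\Pi_D^R$, $\lambda_D\wedge id_D\wedge\lambda_D=\lambda_D$, where $\Pi_D^L=((\varepsilon_D\circ\mu_D)\otimes D)\circ(D\otimes c_{D,D})\circ((\delta_D\circ\eta_D)\otimes D)$, $\Pi_D^R=(D\otimes(\varepsilon_D\circ\mu_D))\circ(c_{D,D}\otimes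 D)\circ(D\otimes(\delta_D\circ\eta_D))$. Weak projection $(D,B,f,g)$: $D$ weak bialgebra, $B$ weak Hopf algebra, $f:B\rightarrow D$ algebra and coalgebra morphism, $g:D\rightarrow B$ coalgebra morphism, $g\circ f=id_B$, $g\circ\mu_D\circ(D\otimes f)=\mu_B\circ(g\otimes B)$. Weak crossed product on $C\otimes A$ ($A$ algebra, $C$ object): given $\psi_A^C:A\otimes C\rightarrow C\otimes A$ with $(C\otimes\mu_A)\circ(\psi_A^C\otimes A)\circ(A\otimes\psi_A^C)=\psi_A^C\circ(\mu_A\otimes C)$, $\nabla_{C\otimes A}=(C\otimes\mu_A)\circ((\psi_A^C\circ(\eta_A\otimes C))\otimes A)$ (idempotent, image $C\times A$, injection $i_{C\otimes A}$, projection $p_{C\otimes A}$); $\sigma_A^C:C\otimes C\rightarrow C\otimes A$ with $\nabla_{C\otimes A}\circ\sigma_A^C=\sigma_A^C$; twisted condition $(C\otimes\mu_A)\circ(\sigma_A^C\otimes A)\circ(C\otimes\psi_A^C)\circ(\psi_A^C\otimes C)=(C\otimes\mu_A)\circ(\psi_A^C\otimes A)\circ(A\otimes\sigma_A^C)$; cocycle condition $(C\otimes\mu_A)\circ(\sigma_A^C\otimes A)\circ(C\otimes\sigma_A^C)=(C\otimes\mu_A)\circ(\sigma_A^C\otimes A)\circ(C\otimes\psi_A^C)\circ(\sigma_A^C\otimes C)$; product $\mu_{C\otimes A}=(C\otimes\mu_A)\circ(\sigma_A^C\otimes\mu_A)\circ(C\otimes\psi_A^C\otimes A)$. Preunit $\nu:K\rightarrow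 C\otimes A$, with $\beta_\nu=(C\otimes\mu_A)\circ(\nu\otimes A)$: $(C\otimes\mu_A)\circ(\sigma_A^C\otimes A)\circ(C\otimes\psi_A^C)\circ(\nu\otimes C)=\nabla_{C\otimes A}\circ(C\otimes\eta_A)$, $(C\otimes\mu_A)\circ(\sigma_A^C\otimes A)\circ(C\otimes\nu)=\nabla_{C\otimes A}\circ(C\otimes\eta_A)$, $(C\otimes\mu_A)\circ(\psi_A^C\otimes A)\circ(A\otimes\nu)=\beta_\nu$. Then $C\times A$ is an algebra with product $p_{C\otimes A}\circ\mu_{C\otimes A}\circ(i_{C\otimes A}\otimes i_{C\otimes A})$ and unit $p_{C\otimes A}\circ\nu$. Weak crossed coproduct on $C\otimes A$ ($C$ coalgebra, $A$ object): $\chi_A^C:C\otimes A\rightarrow A\otimes C$ with $(\chi_A^C\otimes C)\circ(C\otimes\chi_A^C)\circ(\delta_C\otimes A)=(A\otimes\delta_C)\circ\chi_A^C$; $\Gamma_{C\otimes A}=(C\otimes A\otimes\varepsilon_C)\circ(C\otimes\chi_A^C)\circ(\delta_C\otimes A)$ (idempotent); $\tau_A^C:C\otimes A\rightarrow A\otimes A$ with $\tau_A^C\circ\Gamma_{C\otimes A}=\tau_A^C$; twisted $(\tau_A^C\otimes C)\circ(C\otimes\chi_A^C)\circ(\delta_C\otimes A)=(A\otimes\chi_A^C)\circ(\chi_A^C\otimes A)\circ(C\otimes\tau_A^C)\circ(\delta_C\otimes A)$; cocycle $(\tau_A^C\otimes A)\circ(C\otimes\tau_A^C)\circ(\delta_C\otimes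 A)=(A\otimes\tau_A^C)\circ(\chi_A^C\otimes A)\circ(C\otimes\tau_A^C)\circ(\delta_C\otimes A)$; coproduct $\delta_{C\otimes A}=(C\otimes\chi_A^C\otimes A)\circ(\delta_C\otimes\tau_A^C)\circ(\delta_C\otimes A)$. Precounit $\upsilon:C\otimes A\rightarrow K$, with $\gamma_\upsilon=(C\otimes\upsilon)\circ(\delta_C\otimes A)$: $(A\otimes\upsilon)\circ(\chi_A^C\otimes A)\circ(C\otimes\tau_A^C)\circ(\delta_C\otimes A)=(\varepsilon_C\otimes A)\circ\Gamma_{C\otimes A}$, $(\upsilon\otimes A)\circ(C\otimes\tau_A^C)\circ(\delta_C\otimes A)=(\varepsilon_C\otimes A)\circ\Gamma_{C\otimes A}$, $(\upsilon\otimes C)\circ(C\otimes\chi_A^C)\circ(\delta_C\otimes A)=\gamma_\upsilon$. Then the image of $\Gamma_{C\otimes A}$ (injection $i$, projection $p$) is a coalgebra with coproduct $(p\otimes p)\circ\delta_{C\otimes A}\circ i$ and counit $\upsilon\circ i$. A weak bialgebra $D$ is a weak crossed biproduct of the coalgebra $C$ with the algebra $A$ (morphisms $\psi_A^C,\sigma_A^C,\chi_A^C,\tau_A^C$, preunit $\nu$, precounit $\upsilon$) if: $(C\otimes A,\mu_{C\otimes A})$ is a weak crossed product with preunit $\nu$; $(C\otimes A,\delta_{C\otimes A})$ is a weak crossed coproduct with precounit $\upsilon$; $\nabla_{C\otimes A}=\Gamma_{C\otimes A}$; there is an isomorphism of algebras and coalgebras $C\times A\rightarrow D$; and $(\varepsilon_C\otimes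 A)\circ\nu=\eta_A$, $\upsilon\circ(C\otimes\eta_A)=\varepsilon_C$. *)

theory Defs
  imports Main
begin

text \<open>A category is given by a set of objects, a set of arrows, domain/codomain,
composition (total on the type, meaningful on composable arrows) and identities.
Br a b is the braiding c_{a,b} : a (x) b -> b (x) a, and BrI a b its inverse
c_{a,b}^{-1} : b (x) a -> a (x) b.\<close>

record ('o,'m) bcat =
  Obj  :: "'o set"
  Arr  :: "'m set"
  Dom  :: "'m \<Rightarrow> 'o"
  Cod  :: "'m \<Rightarrow> 'o"
  Comp :: "'m \<Rightarrow> 'm \<Rightarrow> 'm"
  Idm  :: "'o \<Rightarrow> 'm"
  TenO :: "'o \<Rightarrow> 'o \<Rightarrow> 'o"
  Ten  :: "'m \<Rightarrow> 'm \<Rightarrow> 'm"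
  Unit :: "'o"
  Br   :: "'o \<Rightarrow> 'o \<Rightarrow> 'm"
  BrI  :: "'o \<Rightarrow> 'o \<Rightarrow> 'm"

text \<open>An object equipped with (possibly) algebra and coalgebra structure morphisms.\<close>
record ('o,'m) stru =
  carr :: "'o"
  mu   :: "'m"
  eta  :: "'m"
  dlt  :: "'m"
  eps  :: "'m"

locale bc =
  fixes M :: "('o,'m) bcat"
begin

abbreviation cmp (infixr "\<cdot>" 55) where "f \<cdot> g \<equiv> Comp M f g"
abbreviation tn (infixr "\<otimes>" 70) where "f \<otimes> g \<equiv> Ten M f g"
abbreviation tno (infixr "\<odot>" 70) where "a \<odot> b \<equiv> TenO M a b"
abbreviation idm where "idm a \<equiv> Idm M a"
abbreviation K where "K \<equiv> Unit M"
abbreviation c where "c a b \<equiv> Br M a b"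
abbreviation ci where "ci a b \<equiv> BrI M a b"

definition hom :: "'m \<Rightarrow> 'o \<Rightarrow> 'o \<Rightarrow> bool" where
  "hom f a b \<longleftrightarrow> f \<in> Arr M \<and> Dom M f = a \<and> Cod M f = b"

definition sbmc :: bool where
  "sbmc \<longleftrightarrow>
    \<comment> \<open>category\<close>
    (\<forall>f \<in> Arr M. Dom M f \<in> Obj M \<and> Cod M f \<in> Obj M) \<and>
    (\<forall>a \<in> Obj M. hom (idm a) a a) \<and>
    (\<forall>f \<in> Arr M. \<forall>g \<in> Arr M. Dom M g = Cod M f \<longrightarrow> hom (g \<cdot> f) (Dom M f) (Cod M g)) \<and>
    (\<forall>f \<in> Arr M. \<forall>g \<in> Arr M. \<forall>h \<in> Arr M. Dom M g = Cod M f \<longrightarrow> Dom M h = Cod M g \<longrightarrow>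
        (h \<cdot> g) \<cdot> f = h \<cdot> (g \<cdot> f)) \<and>
    (\<forall>f \<in> Arr M. f \<cdot> idm (Dom M f) = f \<and> idm (Cod M f) \<cdot> f = f) \<and>
    \<comment> \<open>strict monoidal structure\<close>
    K \<in> Obj M \<and>
    (\<forall>a \<in> Obj M. \<forall>b \<in> Obj M. a \<odot> b \<in> Obj M) \<and>
    (\<forall>f \<in> Arr M. \<forall>g \<in> Arr M. hom (f \<otimes> g) (Dom M f \<odot> Dom M g) (Cod M f \<odot> Cod M g)) \<and>
    (\<forall>a \<in> Obj M. \<forall>b \<in> Obj M. idm a \<otimes> idm b = idm (a \<odot> b)) \<and>
    (\<forall>f \<in> Arr M. \<forall>g \<in> Arr M. \<forall>f' \<in> Arr M. \<forall>g' \<in> Arr M.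
        Dom M g = Cod M f \<longrightarrow> Dom M g' = Cod M f' \<longrightarrow>
        (g \<cdot> f) \<otimes> (g' \<cdot> f') = (g \<otimes> g') \<cdot> (f \<otimes> f')) \<and>
    (\<forall>a \<in> Obj M. \<forall>b \<in> Obj M. \<forall>d \<in> Obj M. (a \<odot> b) \<odot> d = a \<odot> (b \<odot> d)) \<and>
    (\<forall>a \<in> Obj M. K \<odot> a = a \<and> a \<odot> K = a) \<and>
    (\<forall>f \<in> Arr M. \<forall>g \<in> Arr M. \<forall>h \<in> Arr M. (f \<otimes> g) \<otimes> h = f \<otimes> (g \<otimes> h)) \<and>
    (\<forall>f \<in> Arr M. idm K \<otimes> f = f \<and> f \<otimes> idm K = f) \<and>
    \<comment> \<open>braiding: natural isomorphism satisfying the hexagon axioms\<close>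
    (\<forall>a \<in> Obj M. \<forall>b \<in> Obj M. hom (c a b) (a \<odot> b) (b \<odot> a) \<and> hom (ci a b) (b \<odot> a) (a \<odot> b) \<and>
        c a b \<cdot> ci a b = idm (b \<odot> a) \<and> ci a b \<cdot> c a b = idm (a \<odot> b)) \<and>
    (\<forall>f \<in> Arr M. \<forall>g \<in> Arr M.
        c (Cod M f) (Cod M g) \<cdot> (f \<otimes> g) = (g \<otimes> f) \<cdot> c (Dom M f) (Dom M g)) \<and>
    (\<forall>a \<in> Obj M. \<forall>b \<in> Obj M. \<forall>d \<in> Obj M.
        c a (b \<odot> d) = (idm b \<otimes> c a d) \<cdot> (c a b \<otimes> idm d) \<and>
        c (a \<odot> b) d = (c a d \<otimes> idm b) \<cdot> (idm a \<otimes> c b d)) \<and>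
    \<comment> \<open>every idempotent splits\<close>
    (\<forall>a \<in> Obj M. \<forall>q. hom q a a \<longrightarrow> q \<cdot> q = q \<longrightarrow>
        (\<exists>x \<in> Obj M. \<exists>i p. hom i x a \<and> hom p a x \<and> p \<cdot> i = idm x \<and> i \<cdot> p = q))"

definition algebra :: "('o,'m) stru \<Rightarrow> bool" where
  "algebra A \<longleftrightarrow> (let X = carr A; m = mu A; u = eta A in
     X \<in> Obj M \<and> hom m (X \<odot> X) X \<and> hom u K X \<and>
     m \<cdot> (m \<otimes> idm X) = m \<cdot> (idm X \<otimes> m) \<and>
     m \<cdot> (u \<otimes> idm X) = idm X \<and> m \<cdot> (idm X \<otimes> u) = idm X)"

definition coalgebra :: "('o,'m) stru \<Rightarrow> bool" where
  "coalgebra C \<longleftrightarrow> (let X = carr C; d = dlt C; e = eps C in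
     X \<in> Obj M \<and> hom d X (X \<odot> X) \<and> hom e X K \<and>
     (d \<otimes> idm X) \<cdot> d = (idm X \<otimes> d) \<cdot> d \<and>
     (e \<otimes> idm X) \<cdot> d = idm X \<and> (idm X \<otimes> e) \<cdot> d = idm X)"

definition conv :: "('o,'m) stru \<Rightarrow> 'm \<Rightarrow> 'm \<Rightarrow> 'm" where
  "conv D f g = mu D \<cdot> (f \<otimes> g) \<cdot> dlt D"

definition weak_bialgebra :: "('o,'m) stru \<Rightarrow> bool" where
  "weak_bialgebra D \<longleftrightarrow> algebra D \<and> coalgebra D \<and>
    (let X = carr D; m = mu D; u = eta D; d = dlt D; e = eps D; I = idm X in
     d \<cdot> m = (m \<otimes> m) \<cdot> (I \<otimes> c X X \<otimes> I) \<cdot> (d \<otimes> d) \<and>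
     e \<cdot> m \<cdot> (m \<otimes> I) = ((e \<cdot> m) \<otimes> (e \<cdot> m)) \<cdot> (I \<otimes> d \<otimes> I) \<and>
     e \<cdot> m \<cdot> (m \<otimes> I) = ((e \<cdot> m) \<otimes> (e \<cdot> m)) \<cdot> (I \<otimes> (ci X X \<cdot> d) \<otimes> I) \<and>
     (d \<otimes> I) \<cdot> d \<cdot> u = (I \<otimes> m \<otimes> I) \<cdot> ((d \<cdot> u) \<otimes> (d \<cdot> u)) \<and>
     (d \<otimes> I) \<cdot> d \<cdot> u = (I \<otimes> (m \<cdot> ci X X) \<otimes> I) \<cdot> ((d \<cdot> u) \<otimes> (d \<cdot> u)))"

definition PiL :: "('o,'m) stru \<Rightarrow> 'm" where
  "PiL D = ((eps D \<cdot> mu D) \<otimes> idm (carr D)) \<cdot> (idm (carr D) \<otimes> c (carr D) (carr D)) \<cdot>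
           ((dlt D \<cdot> eta D) \<otimes> idm (carr D))"

definition PiR :: "('o,'m) stru \<Rightarrow> 'm" where
  "PiR D = (idm (carr D) \<otimes> (eps D \<cdot> mu D)) \<cdot> (c (carr D) (carr D) \<otimes> idm (carr D)) \<cdot>
           (idm (carr D) \<otimes> (dlt D \<cdot> eta D))"

definition weak_hopf :: "('o,'m) stru \<Rightarrow> 'm \<Rightarrow> bool" where
  "weak_hopf D lam \<longleftrightarrow> weak_bialgebra D \<and> hom lam (carr D) (carr D) \<and>
     conv D (idm (carr D)) lam = PiL D \<and> conv D lam (idm (carr D)) = PiR D \<and>
     conv D (conv D lam (idm (carr D))) lam = lam"

definition alg_mor :: "('o,'m) stru \<Rightarrow> ('o,'m) stru \<Rightarrow> 'm \<Rightarrow> bool" where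
  "alg_mor A B f \<longleftrightarrow> hom f (carr A) (carr B) \<and>
     f \<cdot> mu A = mu B \<cdot> (f \<otimes> f) \<and> f \<cdot> eta A = eta B"

definition coalg_mor :: "('o,'m) stru \<Rightarrow> ('o,'m) stru \<Rightarrow> 'm \<Rightarrow> bool" where
  "coalg_mor A B f \<longleftrightarrow> hom f (carr A) (carr B) \<and>
     dlt B \<cdot> f = (f \<otimes> f) \<cdot> dlt A \<and> eps B \<cdot> f = eps A"

definition weak_projection :: "('o,'m) stru \<Rightarrow> ('o,'m) stru \<Rightarrow> 'm \<Rightarrow> 'm \<Rightarrow> 'm \<Rightarrow> bool" where
  "weak_projection D B lam f g \<longleftrightarrow> weak_bialgebra D \<and> weak_hopf B lam \<and>
     alg_mor B D f \<and> coalg_mor B D f \<and> coalg_mor D B g \<and>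
     g \<cdot> f = idm (carr B) \<and>
     g \<cdot> mu D \<cdot> (idm (carr D) \<otimes> f) = mu B \<cdot> (g \<otimes> idm (carr B))"

definition nabla :: "('o,'m) stru \<Rightarrow> 'o \<Rightarrow> 'm \<Rightarrow> 'm" where
  "nabla A C psi = (idm C \<otimes> mu A) \<cdot> ((psi \<cdot> (eta A \<otimes> idm C)) \<otimes> idm (carr A))"

definition beta :: "('o,'m) stru \<Rightarrow> 'o \<Rightarrow> 'm \<Rightarrow> 'm" where
  "beta A C nu = (idm C \<otimes> mu A) \<cdot> (nu \<otimes> idm (carr A))"

definition mu_cp :: "('o,'m) stru \<Rightarrow> 'o \<Rightarrow> 'm \<Rightarrow> 'm \<Rightarrow> 'm" where
  "mu_cp A C psi sigma = (idm C \<otimes> mu A) \<cdot> (sigma \<otimes> mu A) \<cdot> (idm C \<otimes> psi \<otimes> idm (carr A))"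

definition weak_crossed_product ::
  "('o,'m) stru \<Rightarrow> 'o \<Rightarrow> 'm \<Rightarrow> 'm \<Rightarrow> 'm \<Rightarrow> bool" where
  "weak_crossed_product A C psi sigma nu \<longleftrightarrow>
    (let X = carr A; m = mu A; u = eta A; IA = idm X; IC = idm C; N = nabla A C psi in
     algebra A \<and> C \<in> Obj M \<and>
     hom psi (X \<odot> C) (C \<odot> X) \<and> hom sigma (C \<odot> C) (C \<odot> X) \<and> hom nu K (C \<odot> X) \<and>
     (IC \<otimes> m) \<cdot> (psi \<otimes> IA) \<cdot> (IA \<otimes> psi) = psi \<cdot> (m \<otimes> IC) \<and>
     N \<cdot> sigma = sigma \<and>
     (IC \<otimes> m) \<cdot> (sigma \<otimes> IA) \<cdot> (IC \<otimes> psi) \<cdot> (psi \<otimes> IC) = (IC \<otimes> m) \<cdot> (psi \<otimes> IA) \<cdot> (IA \<otimes> sigma) \<and>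
     (IC \<otimes> m) \<cdot> (sigma \<otimes> IA) \<cdot> (IC \<otimes> sigma) =
        (IC \<otimes> m) \<cdot> (sigma \<otimes> IA) \<cdot> (IC \<otimes> psi) \<cdot> (sigma \<otimes> IC) \<and>
     (IC \<otimes> m) \<cdot> (sigma \<otimes> IA) \<cdot> (IC \<otimes> psi) \<cdot> (nu \<otimes> IC) = N \<cdot> (IC \<otimes> u) \<and>
     (IC \<otimes> m) \<cdot> (sigma \<otimes> IA) \<cdot> (IC \<otimes> nu) = N \<cdot> (IC \<otimes> u) \<and>
     (IC \<otimes> m) \<cdot> (psi \<otimes> IA) \<cdot> (IA \<otimes> nu) = beta A C nu)"

definition gamma :: "('o,'m) stru \<Rightarrow> 'o \<Rightarrow> 'm \<Rightarrow> 'm" where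
  "gamma C A chi = (idm (carr C) \<otimes> idm A \<otimes> eps C) \<cdot> (idm (carr C) \<otimes> chi) \<cdot> (dlt C \<otimes> idm A)"

definition delta_cp :: "('o,'m) stru \<Rightarrow> 'o \<Rightarrow> 'm \<Rightarrow> 'm \<Rightarrow> 'm" where
  "delta_cp C A chi tau = (idm (carr C) \<otimes> chi \<otimes> idm A) \<cdot> (dlt C \<otimes> tau) \<cdot> (dlt C \<otimes> idm A)"

definition weak_crossed_coproduct ::
  "('o,'m) stru \<Rightarrow> 'o \<Rightarrow> 'm \<Rightarrow> 'm \<Rightarrow> 'm \<Rightarrow> bool" where
  "weak_crossed_coproduct C A chi tau ups \<longleftrightarrow>
    (let Y = carr C; d = dlt C; e = eps C; IA = idm A; IC = idm Y; G = gamma C A chi in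
     coalgebra C \<and> A \<in> Obj M \<and>
     hom chi (Y \<odot> A) (A \<odot> Y) \<and> hom tau (Y \<odot> A) (A \<odot> A) \<and> hom ups (Y \<odot> A) K \<and>
     (chi \<otimes> IC) \<cdot> (IC \<otimes> chi) \<cdot> (d \<otimes> IA) = (IA \<otimes> d) \<cdot> chi \<and>
     tau \<cdot> G = tau \<and>
     (tau \<otimes> IC) \<cdot> (IC \<otimes> chi) \<cdot> (d \<otimes> IA) =
        (IA \<otimes> chi) \<cdot> (chi \<otimes> IA) \<cdot> (IC \<otimes> tau) \<cdot> (d \<otimes> IA) \<and>
     (tau \<otimes> IA) \<cdot> (IC \<otimes> tau) \<cdot> (d \<otimes> IA) =
        (IA \<otimes> tau) \<cdot> (chi \<otimes> IA) \<cdot> (IC \<otimes> tau) \<cdot> (d \<otimes> IA) \<and>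
     (IA \<otimes> ups) \<cdot> (chi \<otimes> IA) \<cdot> (IC \<otimes> tau) \<cdot> (d \<otimes> IA) = (e \<otimes> IA) \<cdot> G \<and>
     (ups \<otimes> IA) \<cdot> (IC \<otimes> tau) \<cdot> (d \<otimes> IA) = (e \<otimes> IA) \<cdot> G \<and>
     (ups \<otimes> IC) \<cdot> (IC \<otimes> chi) \<cdot> (d \<otimes> IA) = (IC \<otimes> ups) \<cdot> (d \<otimes> IA))"

text \<open>The object C x A is the image of the idempotent nabla = Gamma, given by a splitting
(X, i, p); the algebra and coalgebra structures on C x A are the induced ones, and
there is an isomorphism phi : C x A -> D (with inverse phi') of algebras and coalgebras.\<close>
definition weak_crossed_biproduct ::
  "('o,'m) stru \<Rightarrow> ('o,'m) stru \<Rightarrow> ('o,'m) stru \<Rightarrow>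
   'm \<Rightarrow> 'm \<Rightarrow> 'm \<Rightarrow> 'm \<Rightarrow> 'm \<Rightarrow> 'm \<Rightarrow> bool" where
  "weak_crossed_biproduct D C A psi sigma chi tau nu ups \<longleftrightarrow>
    weak_bialgebra D \<and> coalgebra C \<and> algebra A \<and>
    weak_crossed_product A (carr C) psi sigma nu \<and>
    weak_crossed_coproduct C (carr A) chi tau ups \<and>
    nabla A (carr C) psi = gamma C (carr A) chi \<and>
    (\<exists>X i p phi phi'. X \<in> Obj M \<and>
        hom i X (carr C \<odot> carr A) \<and> hom p (carr C \<odot> carr A) X \<and>
        p \<cdot> i = idm X \<and> i \<cdot> p = nabla A (carr C) psi \<and>
        hom phi' (carr D) X \<and> phi \<cdot> phi' = idm (carr D) \<and> phi' \<cdot> phi = idm X \<and>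
        (let P = \<lparr>carr = X,
                  mu = p \<cdot> mu_cp A (carr C) psi sigma \<cdot> (i \<otimes> i),
                  eta = p \<cdot> nu,
                  dlt = (p \<otimes> p) \<cdot> delta_cp C (carr A) chi tau \<cdot> i,
                  eps = ups \<cdot> i\<rparr>
         in alg_mor P D phi \<and> coalg_mor P D phi)) \<and>
    (eps C \<otimes> idm (carr A)) \<cdot> nu = eta A \<and>
    ups \<cdot> (idm (carr C) \<otimes> eta A) = eps C"

end

end

theory Submission
  imports Defs
begin


locale sb = bc M for M :: "('o,'m) bcat" + assumes S: "sbmc"
begin

lemma SS: "sbmc" by (rule S)
lemmas P0 = S[unfolded sbmc_def hom_def]
lemmas Q0 = P0[THEN conjunct1]
lemmas Q1 = P0[THEN conjunct2, THEN conjunct1]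
lemmas Q2 = P0[THEN conjunct2, THEN conjunct2, THEN conjunct1]
lemmas Q3 = P0[THEN conjunct2, THEN conjunct2, THEN conjunct2, THEN conjunct1]
lemmas Q4 = P0[THEN conjunct2, THEN conjunct2, THEN conjunct2, THEN conjunct2, THEN conjunct1]
lemmas Q5 = P0[THEN conjunct2, THEN conjunct2, THEN conjunct2, THEN conjunct2, THEN conjunct2, THEN conjunct1]
lemmas Q6 = P0[THEN conjunct2, THEN conjunct2, THEN conjunct2, THEN conjunct2, THEN conjunct2, THEN conjunct2, THEN conjunct1]
lemmas Q7 = P0[THEN conjunct2, THEN conjunct2, THEN conjunct2, THEN conjunct2, THEN conjunct2, THEN conjunct2, THEN conjunct2, THEN conjunct1]
lemmas Q8 = P0[THEN conjunct2, THEN conjunct2, THEN conjunct2, THEN conjunct2, THEN conjunct2, THEN conjunct2, THEN conjunct2, THEN conjunct2, THEN conjunct1]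
lemmas Q9 = P0[THEN conjunct2, THEN conjunct2, THEN conjunct2, THEN conjunct2, THEN conjunct2, THEN conjunct2, THEN conjunct2, THEN conjunct2, THEN conjunct2, THEN conjunct1]
lemmas Q10 = P0[THEN conjunct2, THEN conjunct2, THEN conjunct2, THEN conjunct2, THEN conjunct2, THEN conjunct2, THEN conjunct2, THEN conjunct2, THEN conjunct2, THEN conjunct2, THEN conjunct1]
lemmas Q11 = P0[THEN conjunct2, THEN conjunct2, THEN conjunct2, THEN conjunct2, THEN conjunct2, THEN conjunct2, THEN conjunct2, THEN conjunct2, THEN conjunct2, THEN conjunct2, THEN conjunct2, THEN conjunct1]
lemmas Q12 = P0[THEN conjunct2, THEN conjunct2, THEN conjunct2, THEN conjunct2, THEN conjunct2, THEN conjunct2, THEN conjunct2, THEN conjunct2, THEN conjunct2, THEN conjunct2, THEN conjunct2, THEN conjunct2, THEN conjunct1]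
lemmas Q13 = P0[THEN conjunct2, THEN conjunct2, THEN conjunct2, THEN conjunct2, THEN conjunct2, THEN conjunct2, THEN conjunct2, THEN conjunct2, THEN conjunct2, THEN conjunct2, THEN conjunct2, THEN conjunct2, THEN conjunct2, THEN conjunct1]
lemmas Q14 = P0[THEN conjunct2, THEN conjunct2, THEN conjunct2, THEN conjunct2, THEN conjunct2, THEN conjunct2, THEN conjunct2, THEN conjunct2, THEN conjunct2, THEN conjunct2, THEN conjunct2, THEN conjunct2, THEN conjunct2, THEN conjunct2, THEN conjunct1]
lemmas Q15 = P0[THEN conjunct2, THEN conjunct2, THEN conjunct2, THEN conjunct2, THEN conjunct2, THEN conjunct2, THEN conjunct2, THEN conjunct2, THEN conjunct2, THEN conjunct2, THEN conjunct2, THEN conjunct2, THEN conjunct2, THEN conjunct2, THEN conjunct2, THEN conjunct1]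
lemmas Q16 = P0[THEN conjunct2, THEN conjunct2, THEN conjunct2, THEN conjunct2, THEN conjunct2, THEN conjunct2, THEN conjunct2, THEN conjunct2, THEN conjunct2, THEN conjunct2, THEN conjunct2, THEN conjunct2, THEN conjunct2, THEN conjunct2, THEN conjunct2, THEN conjunct2, THEN conjunct1]

lemma dom_obj[simp]: "f \<in> Arr M \<Longrightarrow> Dom M f \<in> Obj M" using Q0 by blast
lemma cod_obj[simp]: "f \<in> Arr M \<Longrightarrow> Cod M f \<in> Obj M" using Q0 by blast
lemma id_arr[simp]: "a \<in> Obj M \<Longrightarrow> idm a \<in> Arr M" using Q1 by blast
lemma id_dom[simp]: "a \<in> Obj M \<Longrightarrow> Dom M (idm a) = a" using Q1 by blast
lemma id_cod[simp]: "a \<in> Obj M \<Longrightarrow> Cod M (idm a) = a" using Q1 by blast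
lemma comp_arr[simp]: "f \<in> Arr M \<Longrightarrow> g \<in> Arr M \<Longrightarrow> Dom M g = Cod M f \<Longrightarrow> g \<cdot> f \<in> Arr M"
  using Q2 by blast
lemma comp_dom[simp]: "f \<in> Arr M \<Longrightarrow> g \<in> Arr M \<Longrightarrow> Dom M g = Cod M f \<Longrightarrow> Dom M (g \<cdot> f) = Dom M f"
  using Q2 by blast
lemma comp_cod[simp]: "f \<in> Arr M \<Longrightarrow> g \<in> Arr M \<Longrightarrow> Dom M g = Cod M f \<Longrightarrow> Cod M (g \<cdot> f) = Cod M g"
  using Q2 by blast
lemma assoc[simp]: "f \<in> Arr M \<Longrightarrow> g \<in> Arr M \<Longrightarrow> h \<in> Arr M \<Longrightarrow> Dom M g = Cod M f \<Longrightarrow> Dom M h = Cod M g \<Longrightarrow>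
        (h \<cdot> g) \<cdot> f = h \<cdot> (g \<cdot> f)"
  using Q3 by blast
lemma idr[simp]: "f \<in> Arr M \<Longrightarrow> a = Dom M f \<Longrightarrow> f \<cdot> idm a = f" using Q4 by blast
lemma idl[simp]: "f \<in> Arr M \<Longrightarrow> a = Cod M f \<Longrightarrow> idm a \<cdot> f = f" using Q4 by blast
lemma K_obj[simp]: "K \<in> Obj M" using Q5 by blast
lemma teno_obj[simp]: "a \<in> Obj M \<Longrightarrow> b \<in> Obj M \<Longrightarrow> a \<odot> b \<in> Obj M" using Q6 by blast
lemma ten_arr[simp]: "f \<in> Arr M \<Longrightarrow> g \<in> Arr M \<Longrightarrow> f \<otimes> g \<in> Arr M" using Q7 by blast
lemma ten_dom[simp]: "f \<in> Arr M \<Longrightarrow> g \<in> Arr M \<Longrightarrow> Dom M (f \<otimes> g) = Dom M f \<odot> Dom M g" using Q7 by blast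
lemma ten_cod[simp]: "f \<in> Arr M \<Longrightarrow> g \<in> Arr M \<Longrightarrow> Cod M (f \<otimes> g) = Cod M f \<odot> Cod M g" using Q7 by blast
lemma idten: "a \<in> Obj M \<Longrightarrow> b \<in> Obj M \<Longrightarrow> idm a \<otimes> idm b = idm (a \<odot> b)" using Q8 by blast
lemma inter: "f \<in> Arr M \<Longrightarrow> g \<in> Arr M \<Longrightarrow> f' \<in> Arr M \<Longrightarrow> g' \<in> Arr M \<Longrightarrow>
        Dom M g = Cod M f \<Longrightarrow> Dom M g' = Cod M f' \<Longrightarrow>
        (g \<cdot> f) \<otimes> (g' \<cdot> f') = (g \<otimes> g') \<cdot> (f \<otimes> f')" using Q9 by blast
lemma oassoc[simp]: "a \<in> Obj M \<Longrightarrow> b \<in> Obj M \<Longrightarrow> d \<in> Obj M \<Longrightarrow> (a \<odot> b) \<odot> d = a \<odot> (b \<odot> d)" using Q10 by blast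
lemma ounitl[simp]: "a \<in> Obj M \<Longrightarrow> K \<odot> a = a" using Q11 by blast
lemma ounitr[simp]: "a \<in> Obj M \<Longrightarrow> a \<odot> K = a" using Q11 by blast
lemma tassoc: "f \<in> Arr M \<Longrightarrow> g \<in> Arr M \<Longrightarrow> h \<in> Arr M \<Longrightarrow> (f \<otimes> g) \<otimes> h = f \<otimes> (g \<otimes> h)" using Q12 by blast
lemma tunitl[simp]: "f \<in> Arr M \<Longrightarrow> idm K \<otimes> f = f" using Q13 by blast
lemma tunitr[simp]: "f \<in> Arr M \<Longrightarrow> f \<otimes> idm K = f" using Q13 by blast

lemma hom_iff: "hom f a b \<longleftrightarrow> f \<in> Arr M \<and> Dom M f = a \<and> Cod M f = b" by (simp add: hom_def)


lemma inter_rev: "f \<in> Arr M \<Longrightarrow> g \<in> Arr M \<Longrightarrow> f' \<in> Arr M \<Longrightarrow> g' \<in> Arr M \<Longrightarrow>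
        Dom M g = Cod M f \<Longrightarrow> Dom M g' = Cod M f' \<Longrightarrow>
        (g \<otimes> g') \<cdot> (f \<otimes> f') = (g \<cdot> f) \<otimes> (g' \<cdot> f')" using inter by simp

lemma idsplit: "a \<in> Obj M \<Longrightarrow> b \<in> Obj M \<Longrightarrow> idm (a \<odot> b) = idm a \<otimes> idm b" by (simp add: idten)

lemma comp3: "f \<in> Arr M \<Longrightarrow> g \<in> Arr M \<Longrightarrow> h \<in> Arr M \<Longrightarrow> Dom M g = Cod M f \<Longrightarrow> Dom M h = Cod M g \<Longrightarrow>
        h \<cdot> (g \<cdot> f) = (h \<cdot> g) \<cdot> f" by simp

end

locale ctx = sb M for M :: "('o,'m) bcat" +
  fixes Bo Co :: 'o and m u dB eB dC eC psi sigma chi tau nu :: 'm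
  assumes Bo[simp]: "Bo \<in> Obj M" and Co[simp]: "Co \<in> Obj M"
  and m[simp]: "m \<in> Arr M" "Dom M m = Bo \<odot> Bo" "Cod M m = Bo"
  and u[simp]: "u \<in> Arr M" "Dom M u = K" "Cod M u = Bo"
  and dB[simp]: "dB \<in> Arr M" "Dom M dB = Bo" "Cod M dB = Bo \<odot> Bo"
  and eB[simp]: "eB \<in> Arr M" "Dom M eB = Bo" "Cod M eB = K"
  and dC[simp]: "dC \<in> Arr M" "Dom M dC = Co" "Cod M dC = Co \<odot> Co"
  and eC[simp]: "eC \<in> Arr M" "Dom M eC = Co" "Cod M eC = K"
  and psi[simp]: "psi \<in> Arr M" "Dom M psi = Bo \<odot> Co" "Cod M psi = Co \<odot> Bo"
  and sigma[simp]: "sigma \<in> Arr M" "Dom M sigma = Co \<odot> Co" "Cod M sigma = Co \<odot> Bo"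
  and chi[simp]: "chi \<in> Arr M" "Dom M chi = Co \<odot> Bo" "Cod M chi = Bo \<odot> Co"
  and tau[simp]: "tau \<in> Arr M" "Dom M tau = Co \<odot> Bo" "Cod M tau = Bo \<odot> Bo"
  and nu[simp]: "nu \<in> Arr M" "Dom M nu = K" "Cod M nu = Co \<odot> Bo"
  and preunit2: "(idm Co \<otimes> m) \<cdot> (sigma \<otimes> idm Bo) \<cdot> (idm Co \<otimes> nu) = ((idm Co \<otimes> m) \<cdot> ((psi \<cdot> (u \<otimes> idm Co)) \<otimes> idm Bo)) \<cdot> (idm Co \<otimes> u)"
  and preunit3: "(idm Co \<otimes> m) \<cdot> (psi \<otimes> idm Bo) \<cdot> (idm Bo \<otimes> nu) = (idm Co \<otimes> m) \<cdot> (nu \<otimes> idm Bo)"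
  and nueps: "(eC \<otimes> idm Bo) \<cdot> nu = u"
  and massoc: "m \<cdot> (m \<otimes> idm Bo) = m \<cdot> (idm Bo \<otimes> m)"
  and munl: "m \<cdot> (u \<otimes> idm Bo) = idm Bo" and munr: "m \<cdot> (idm Bo \<otimes> u) = idm Bo"
begin

abbreviation "IB \<equiv> idm Bo"
abbreviation "IC \<equiv> idm Co"

lemma ten_id_comp: "a \<in> Obj M \<Longrightarrow> f \<in> Arr M \<Longrightarrow> g \<in> Arr M \<Longrightarrow> Dom M g = Cod M f \<Longrightarrow>
   idm a \<otimes> (g \<cdot> f) = (idm a \<otimes> g) \<cdot> (idm a \<otimes> f)"
  using inter[of "idm a" "idm a" f g] by simp
lemma comp_ten_id: "a \<in> Obj M \<Longrightarrow> f \<in> Arr M \<Longrightarrow> g \<in> Arr M \<Longrightarrow> Dom M g = Cod M f \<Longrightarrow>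
   (g \<cdot> f) \<otimes> idm a = (g \<otimes> idm a) \<cdot> (f \<otimes> idm a)"
  using inter[of f g "idm a" "idm a"] by simp

lemma slide1: "f \<in> Arr M \<Longrightarrow> g \<in> Arr M \<Longrightarrow> f \<otimes> g = (f \<otimes> idm (Cod M g)) \<cdot> (idm (Dom M f) \<otimes> g)"
  using inter[of "idm (Dom M f)" f g "idm (Cod M g)"] by simp
lemma slide2: "f \<in> Arr M \<Longrightarrow> g \<in> Arr M \<Longrightarrow> f \<otimes> g = (idm (Cod M f) \<otimes> g) \<cdot> (f \<otimes> idm (Dom M g))"
  using inter[of f "idm (Cod M f)" "idm (Dom M g)" g] by simp

lemma pre: "g \<cdot> f = h \<Longrightarrow> f \<in> Arr M \<Longrightarrow> g \<in> Arr M \<Longrightarrow> z \<in> Arr M \<Longrightarrow> Dom M g = Cod M f \<Longrightarrow> Dom M f = Cod M z \<Longrightarrow>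
  g \<cdot> (f \<cdot> z) = h \<cdot> z" by (metis assoc)

lemma pre3: "h \<cdot> g \<cdot> f = k \<Longrightarrow> f \<in> Arr M \<Longrightarrow> g \<in> Arr M \<Longrightarrow> h \<in> Arr M \<Longrightarrow> z \<in> Arr M \<Longrightarrow>
  Dom M g = Cod M f \<Longrightarrow> Dom M h = Cod M g \<Longrightarrow> Dom M f = Cod M z \<Longrightarrow>
  h \<cdot> (g \<cdot> (f \<cdot> z)) = k \<cdot> z"
proof -
  assume a: "h \<cdot> g \<cdot> f = k" "f \<in> Arr M" "g \<in> Arr M" "h \<in> Arr M" "z \<in> Arr M"
    "Dom M g = Cod M f" "Dom M h = Cod M g" "Dom M f = Cod M z"
  then have "(h \<cdot> g) \<cdot> f = k" by simp
  then have "(h \<cdot> g) \<cdot> (f \<cdot> z) = k \<cdot> z" using pre[of "h \<cdot> g" f k z] a by simp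
  then show ?thesis using a by simp
qed

lemma RM: assumes [simp]: "Q \<in> Arr M" "Cod M Q = Co \<odot> Bo"
  shows "((IC \<otimes> m) \<cdot> (Q \<otimes> IB)) \<cdot> (idm (Dom M Q) \<otimes> m) = (IC \<otimes> m) \<cdot> (((IC \<otimes> m) \<cdot> (Q \<otimes> IB)) \<otimes> IB)"
proof -
  have 1: "(Q \<otimes> IB) \<cdot> (idm (Dom M Q) \<otimes> m) = (idm (Co \<odot> Bo) \<otimes> m) \<cdot> (Q \<otimes> idm (Bo \<odot> Bo))"
    by (simp add: inter_rev)
  have 2: "(IC \<otimes> m) \<cdot> (idm (Co \<odot> Bo) \<otimes> m) = (IC \<otimes> m) \<cdot> (IC \<otimes> (m \<otimes> IB))"
    by (simp add: idsplit tassoc inter_rev massoc)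
  have 3: "((IC \<otimes> m) \<cdot> (Q \<otimes> IB)) \<otimes> IB = (IC \<otimes> (m \<otimes> IB)) \<cdot> (Q \<otimes> idm (Bo \<odot> Bo))"
    by (simp add: comp_ten_id tassoc idten)
  show ?thesis using 1 3 pre[OF 2] by simp
qed


definition "N = (IC \<otimes> m) \<cdot> ((psi \<cdot> (u \<otimes> IC)) \<otimes> IB)"
definition "bt = (IC \<otimes> m) \<cdot> (nu \<otimes> IB)"
lemma N_ty[simp]: "N \<in> Arr M" "Dom M N = Co \<odot> Bo" "Cod M N = Co \<odot> Bo" by (simp_all add: N_def)
lemma bt_ty[simp]: "bt \<in> Arr M" "Dom M bt = Bo" "Cod M bt = Co \<odot> Bo" by (simp_all add: bt_def)

lemma bt_u: "bt \<cdot> u = nu"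
proof -
  have 1: "(nu \<otimes> IB) \<cdot> u = ((IC \<otimes> IB) \<otimes> u) \<cdot> nu"
    using slide1[of nu u] slide2[of nu u] by (simp add: idten)
  have 2: "(IC \<otimes> m) \<cdot> ((IC \<otimes> IB) \<otimes> u) = IC \<otimes> IB"
    by (simp add: tassoc inter_rev munr)
  show ?thesis unfolding bt_def using pre[OF 2, of nu] 1 by (simp add: idten)
qed

lemma N_nu: "N \<cdot> nu = nu"
proof -
  have 1: "(IB \<otimes> nu) \<cdot> u = ((u \<otimes> IC) \<otimes> IB) \<cdot> nu"
    using slide1[of u nu] slide2[of u nu] by (simp add: idten tassoc)
  have 2: "(psi \<otimes> IB) \<cdot> ((u \<otimes> IC) \<otimes> IB) = (psi \<cdot> (u \<otimes> IC)) \<otimes> IB"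
    by (simp add: inter_rev)
  have "N \<cdot> nu = (IC \<otimes> m) \<cdot> (psi \<otimes> IB) \<cdot> (IB \<otimes> nu) \<cdot> u"
    unfolding N_def using 1 pre[OF 2] by simp
  also have "... = bt \<cdot> u" using preunit3 unfolding bt_def by (simp flip: assoc)
  finally show ?thesis using bt_u by simp
qed

lemma N_m: "N \<cdot> (IC \<otimes> m) = (IC \<otimes> m) \<cdot> (N \<otimes> IB)"
  using RM[of "psi \<cdot> (u \<otimes> IC)"] unfolding N_def by simp

lemma bt_m: "bt \<cdot> m = (IC \<otimes> m) \<cdot> (bt \<otimes> IB)"
  using RM[of nu] unfolding bt_def by simp

lemma N_bt: "N \<cdot> bt = bt"
proof -
  have 1: "(N \<otimes> IB) \<cdot> (nu \<otimes> IB) = nu \<otimes> IB" using N_nu by (simp add: inter_rev)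
  have "N \<cdot> bt = (IC \<otimes> m) \<cdot> (N \<otimes> IB) \<cdot> (nu \<otimes> IB)"
    unfolding bt_def using pre[OF N_m, of "nu \<otimes> IB"] by simp
  then show ?thesis using 1 unfolding bt_def by simp
qed

lemma E: "(eC \<otimes> IB) \<cdot> (IC \<otimes> m) = m \<cdot> ((eC \<otimes> IB) \<otimes> IB)"
proof -
  have "(eC \<otimes> IB) \<cdot> (IC \<otimes> m) = eC \<otimes> m" by (simp add: inter_rev)
  also have "... = m \<cdot> ((eC \<otimes> IB) \<otimes> IB)" using slide2[of eC m] by (simp add: idten tassoc)
  finally show ?thesis .
qed

lemma eC_bt: "(eC \<otimes> IB) \<cdot> bt = IB"
proof -
  have 1: "((eC \<otimes> IB) \<otimes> IB) \<cdot> (nu \<otimes> IB) = u \<otimes> IB" using nueps by (simp add: inter_rev)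
  show ?thesis unfolding bt_def using pre[OF E, of "nu \<otimes> IB"] 1 munl by simp
qed

lemma A: "(IC \<otimes> m) \<cdot> (idm (Co \<odot> Bo) \<otimes> m) = (IC \<otimes> m) \<cdot> (IC \<otimes> (m \<otimes> IB))"
  by (simp add: idsplit tassoc inter_rev massoc)

lemma Sg: "(IC \<otimes> m) \<cdot> (sigma \<otimes> IB) \<cdot> (IC \<otimes> bt) = N"
proof -
  have 1: "IC \<otimes> bt = (idm (Co \<odot> Co) \<otimes> m) \<cdot> (IC \<otimes> (nu \<otimes> IB))"
    unfolding bt_def by (simp add: ten_id_comp idsplit tassoc)
  have 2: "(IC \<otimes> m) \<cdot> (sigma \<otimes> IB) \<cdot> (IC \<otimes> bt) = (IC \<otimes> m) \<cdot> (((IC \<otimes> m) \<cdot> (sigma \<otimes> IB)) \<otimes> IB) \<cdot> (IC \<otimes> (nu \<otimes> IB))"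
    using pre[OF RM[of sigma], of "IC \<otimes> (nu \<otimes> IB)"] 1 by simp
  have 3: "(((IC \<otimes> m) \<cdot> (sigma \<otimes> IB)) \<otimes> IB) \<cdot> (IC \<otimes> (nu \<otimes> IB)) = 
     ((IC \<otimes> m) \<cdot> (sigma \<otimes> IB) \<cdot> (IC \<otimes> nu)) \<otimes> IB"
    by (simp add: tassoc comp_ten_id)
  have 4: "((IC \<otimes> m) \<cdot> (sigma \<otimes> IB) \<cdot> (IC \<otimes> nu)) \<otimes> IB = (N \<otimes> IB) \<cdot> (IC \<otimes> (u \<otimes> IB))"
    using preunit2 unfolding N_def[symmetric] by (simp add: comp_ten_id tassoc)
  have 5: "(IC \<otimes> m) \<cdot> (N \<otimes> IB) \<cdot> (IC \<otimes> (u \<otimes> IB)) = N"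
    using pre[OF N_m[symmetric], of "IC \<otimes> (u \<otimes> IB)"] munl by (simp add: inter_rev idten)
  show ?thesis by (simp only: 2 3 4 5)
qed

definition "mucp = (IC \<otimes> m) \<cdot> (sigma \<otimes> m) \<cdot> (IC \<otimes> psi \<otimes> IB)"
lemma mucp_ty[simp]: "mucp \<in> Arr M" "Dom M mucp = Co \<odot> Bo \<odot> Co \<odot> Bo" "Cod M mucp = Co \<odot> Bo"
  by (simp_all add: mucp_def)

lemma W4: "(IC \<otimes> m) \<cdot> (psi \<otimes> m) \<cdot> (IB \<otimes> (nu \<otimes> IB)) = bt \<cdot> m"
proof -
  have 1: "(IC \<otimes> m) \<cdot> (psi \<otimes> m) = (IC \<otimes> m) \<cdot> (IC \<otimes> (m \<otimes> IB)) \<cdot> (psi \<otimes> idm (Bo \<odot> Bo))"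
    using slide2[of psi m] pre[OF A, of "psi \<otimes> idm (Bo \<odot> Bo)"] by simp
  have 2: "(IC \<otimes> (m \<otimes> IB)) \<cdot> (psi \<otimes> idm (Bo \<odot> Bo)) \<cdot> (IB \<otimes> (nu \<otimes> IB)) = bt \<otimes> IB"
    by (simp add: preunit3[unfolded bt_def[symmetric], symmetric] comp_ten_id tassoc idsplit)
  show ?thesis using pre[OF 1, of "IB \<otimes> (nu \<otimes> IB)"] 2 bt_m by simp
qed

lemma V: "mucp \<cdot> (idm (Co \<odot> Bo) \<otimes> bt) = (IC \<otimes> m) \<cdot> (N \<otimes> IB)"
proof -
  have 1: "(IC \<otimes> (psi \<otimes> IB)) \<cdot> (idm (Co \<odot> Bo) \<otimes> bt) = IC \<otimes> ((psi \<otimes> m) \<cdot> (IB \<otimes> (nu \<otimes> IB)))"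
  proof -
    have a: "idm (Co \<odot> Bo) \<otimes> bt = IC \<otimes> (IB \<otimes> bt)" by (simp add: idsplit tassoc)
    have c1: "IB \<otimes> bt = (IB \<otimes> (IC \<otimes> m)) \<cdot> (IB \<otimes> (nu \<otimes> IB))" unfolding bt_def by (simp add: ten_id_comp)
    have c2: "(psi \<otimes> IB) \<cdot> (IB \<otimes> (IC \<otimes> m)) = psi \<otimes> m" by (simp add: tassoc[symmetric] idten inter_rev)
    have c: "(psi \<otimes> IB) \<cdot> (IB \<otimes> bt) = (psi \<otimes> m) \<cdot> (IB \<otimes> (nu \<otimes> IB))"
      unfolding c1 using pre[OF c2, of "IB \<otimes> (nu \<otimes> IB)"] by simp
    show ?thesis unfolding a using c by (simp add: inter_rev)
  qed
  have 2: "(sigma \<otimes> m) \<cdot> (IC \<otimes> ((psi \<otimes> m) \<cdot> (IB \<otimes> (nu \<otimes> IB)))) = (sigma \<otimes> IB) \<cdot> (IC \<otimes> (bt \<cdot> m))"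
    using slide1[of sigma m] W4[symmetric] by (simp add: idsplit tassoc inter_rev)
  have 3: "(IC \<otimes> m) \<cdot> (sigma \<otimes> IB) \<cdot> (IC \<otimes> (bt \<cdot> m)) = N \<cdot> (IC \<otimes> m)"
    using pre3[OF Sg, of "IC \<otimes> m"] by (simp add: ten_id_comp)
  show ?thesis unfolding mucp_def using 1 2 3 N_m by simp
qed

lemma F6: assumes [simp]: "x \<in> Arr M" "Cod M x = Co \<odot> Bo" and Nx: "N \<cdot> x = x"
  shows "mucp \<cdot> (x \<otimes> bt) = (IC \<otimes> m) \<cdot> (x \<otimes> IB)"
proof -
  have "x \<otimes> bt = (idm (Co \<odot> Bo) \<otimes> bt) \<cdot> (x \<otimes> IB)" using slide2[of x bt] by simp
  then have "mucp \<cdot> (x \<otimes> bt) = (IC \<otimes> m) \<cdot> (N \<otimes> IB) \<cdot> (x \<otimes> IB)"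
    using pre[OF V, of "x \<otimes> IB"] by simp
  then show ?thesis using Nx by (simp add: inter_rev)
qed

end

locale ctx2 = ctx +
  assumes Gam: "(IC \<otimes> IB \<otimes> eC) \<cdot> (IC \<otimes> chi) \<cdot> (dC \<otimes> IB) = N"
  and cl: "(eC \<otimes> IC) \<cdot> dC = IC" and cr: "(IC \<otimes> eC) \<cdot> dC = IC"
  and chico: "(chi \<otimes> IC) \<cdot> (IC \<otimes> chi) \<cdot> (dC \<otimes> IB) = (IB \<otimes> dC) \<cdot> chi"
  and tauG: "tau \<cdot> N = tau"
  and twist: "(tau \<otimes> IC) \<cdot> (IC \<otimes> chi) \<cdot> (dC \<otimes> IB) = (IB \<otimes> chi) \<cdot> (chi \<otimes> IB) \<cdot> (IC \<otimes> tau) \<cdot> (dC \<otimes> IB)"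
  and tauhyp: "tau = (eC \<otimes> dB) \<cdot> N"
begin

definition "G = (IB \<otimes> eC) \<cdot> chi"
lemma G_ty[simp]: "G \<in> Arr M" "Dom M G = Co \<odot> Bo" "Cod M G = Bo" by (simp_all add: G_def)

lemma GN: "(eC \<otimes> IB) \<cdot> N = G"
proof -
  have 1: "(eC \<otimes> IB) \<cdot> (IC \<otimes> (IB \<otimes> eC)) = (IB \<otimes> eC) \<cdot> (eC \<otimes> idm (Bo \<odot> Co))"
    using slide2[of eC "IB \<otimes> eC"] by (simp add: inter_rev)
  have 2: "(eC \<otimes> idm (Bo \<odot> Co)) \<cdot> (IC \<otimes> chi) = chi \<cdot> ((eC \<otimes> IC) \<otimes> IB)"
    using slide2[of eC chi] by (simp add: inter_rev idten tassoc)
  have 3: "((eC \<otimes> IC) \<otimes> IB) \<cdot> (dC \<otimes> IB) = IC \<otimes> IB"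
    using cl by (simp add: inter_rev)
  show ?thesis unfolding G_def Gam[symmetric] using pre[OF 1, of "(IC \<otimes> chi) \<cdot> (dC \<otimes> IB)"] pre[OF 2, of "dC \<otimes> IB"] 3
    by (simp add: idten)
qed

definition "dcp = (IC \<otimes> chi \<otimes> IB) \<cdot> (dC \<otimes> tau) \<cdot> (dC \<otimes> IB)"

lemma F9a: "(G \<otimes> G) \<cdot> (IC \<otimes> (chi \<otimes> IB)) \<cdot> (dC \<otimes> (IB \<otimes> IB)) = (IB \<otimes> G) \<cdot> (chi \<otimes> IB)"
proof -
  have 1: "(IC \<otimes> (chi \<otimes> IB)) \<cdot> (dC \<otimes> (IB \<otimes> IB)) = ((IC \<otimes> chi) \<cdot> (dC \<otimes> IB)) \<otimes> IB"
    by (simp add: tassoc comp_ten_id)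
  have 2: "G \<otimes> G = (IB \<otimes> G) \<cdot> ((IB \<otimes> eC) \<otimes> idm (Co \<odot> Bo)) \<cdot> (chi \<otimes> idm (Co \<odot> Bo))"
    using slide2[of G G] unfolding G_def by (simp add: comp_ten_id)
  have 3: "(chi \<otimes> idm (Co \<odot> Bo)) \<cdot> (((IC \<otimes> chi) \<cdot> (dC \<otimes> IB)) \<otimes> IB) = ((IB \<otimes> dC) \<cdot> chi) \<otimes> IB"
  proof -
    have "(chi \<otimes> idm (Co \<odot> Bo)) \<cdot> (((IC \<otimes> chi) \<cdot> (dC \<otimes> IB)) \<otimes> IB) = ((chi \<otimes> IC) \<cdot> (IC \<otimes> chi) \<cdot> (dC \<otimes> IB)) \<otimes> IB"
      by (simp add: idsplit tassoc[symmetric] comp_ten_id)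
    then show ?thesis using chico by simp
  qed
  have h4a: "(IB \<otimes> eC) \<otimes> idm (Co \<odot> Bo) = ((IB \<otimes> eC) \<otimes> IC) \<otimes> IB" by (simp add: idsplit tassoc)
  have h4b: "((IB \<otimes> eC) \<otimes> IC) \<cdot> (IB \<otimes> dC) = idm (Bo \<odot> Co)" using cl by (simp add: tassoc inter_rev idten)
  have 4: "((IB \<otimes> eC) \<otimes> idm (Co \<odot> Bo)) \<cdot> (((IB \<otimes> dC) \<cdot> chi) \<otimes> IB) = chi \<otimes> IB"
    using h4a pre[OF h4b, of chi] by (simp add: inter_rev)
  show ?thesis using 1 2 3 4 by simp
qed

lemma dcp_ty[simp]: "dcp \<in> Arr M" "Dom M dcp = Co \<odot> Bo" "Cod M dcp = Co \<odot> Bo \<odot> Co \<odot> Bo"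
  by (simp_all add: dcp_def)

lemma tauG': "tau = dB \<cdot> G"
proof -
  have "eC \<otimes> dB = dB \<cdot> (eC \<otimes> IB)" using slide2[of eC dB] by simp
  then show ?thesis using tauhyp GN pre[of dB "eC \<otimes> IB" "eC \<otimes> dB" N] by simp
qed

lemma F9: "(G \<otimes> G) \<cdot> dcp = dB \<cdot> G"
proof -
  have b1: "dC \<otimes> tau = (dC \<otimes> (IB \<otimes> IB)) \<cdot> (IC \<otimes> tau)" using slide1[of dC tau] by (simp add: idten)
  have "(G \<otimes> G) \<cdot> dcp = (IB \<otimes> G) \<cdot> (chi \<otimes> IB) \<cdot> (IC \<otimes> tau) \<cdot> (dC \<otimes> IB)"
    unfolding dcp_def b1 using pre3[OF F9a, of "(IC \<otimes> tau) \<cdot> (dC \<otimes> IB)"] by simp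
  also have "... = (IB \<otimes> (IB \<otimes> eC)) \<cdot> (IB \<otimes> chi) \<cdot> (chi \<otimes> IB) \<cdot> (IC \<otimes> tau) \<cdot> (dC \<otimes> IB)"
    unfolding G_def by (simp add: ten_id_comp)
  also have "... = (IB \<otimes> (IB \<otimes> eC)) \<cdot> (tau \<otimes> IC) \<cdot> (IC \<otimes> chi) \<cdot> (dC \<otimes> IB)"
    using twist by simp
  also have "... = tau \<cdot> (IC \<otimes> (IB \<otimes> eC)) \<cdot> (IC \<otimes> chi) \<cdot> (dC \<otimes> IB)"
  proof -
    have b3: "(IB \<otimes> (IB \<otimes> eC)) \<cdot> (tau \<otimes> IC) = tau \<cdot> (IC \<otimes> (IB \<otimes> eC))"
    proof -
      have "(IB \<otimes> (IB \<otimes> eC)) \<cdot> (tau \<otimes> IC) = tau \<otimes> eC" by (simp add: tassoc[symmetric] idten inter_rev)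
      also have "... = tau \<cdot> (IC \<otimes> (IB \<otimes> eC))" using slide1[of tau eC] by (simp add: tassoc[symmetric] idten)
      finally show ?thesis .
    qed
    show ?thesis using pre[OF b3, of "(IC \<otimes> chi) \<cdot> (dC \<otimes> IB)"] by simp
  qed
  also have "... = tau" using Gam tauG by simp
  finally show ?thesis using tauG' by simp
qed

end

locale ctx3 = ctx2 +
  fixes Do X mD uD dD eD i p phi phi' ups
  assumes Do[simp]: "Do \<in> Obj M" and X[simp]: "X \<in> Obj M"
  and mD[simp]: "mD \<in> Arr M" "Dom M mD = Do \<odot> Do" "Cod M mD = Do"
  and uD[simp]: "uD \<in> Arr M" "Dom M uD = K" "Cod M uD = Do"
  and dD[simp]: "dD \<in> Arr M" "Dom M dD = Do" "Cod M dD = Do \<odot> Do"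
  and eD[simp]: "eD \<in> Arr M" "Dom M eD = Do" "Cod M eD = K"
  and i[simp]: "i \<in> Arr M" "Dom M i = X" "Cod M i = Co \<odot> Bo"
  and p[simp]: "p \<in> Arr M" "Dom M p = Co \<odot> Bo" "Cod M p = X"
  and phi[simp]: "phi \<in> Arr M" "Dom M phi = X" "Cod M phi = Do"
  and phi'[simp]: "phi' \<in> Arr M" "Dom M phi' = Do" "Cod M phi' = X"
  and pi: "p \<cdot> i = idm X" and ip: "i \<cdot> p = N"
  and phiphi': "phi \<cdot> phi' = idm Do" and phi'phi: "phi' \<cdot> phi = idm X"
  and algm: "phi \<cdot> p \<cdot> mucp \<cdot> (i \<otimes> i) = mD \<cdot> (phi \<otimes> phi)"
  and algu: "phi \<cdot> p \<cdot> nu = uD"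
  and coalgd: "dD \<cdot> phi = (phi \<otimes> phi) \<cdot> (p \<otimes> p) \<cdot> dcp \<cdot> i"
  and coalge: "eD \<cdot> phi = ups \<cdot> i"
  and upsdef: "ups = (eC \<otimes> eB) \<cdot> N"
  and hypd: "dcp \<cdot> bt = (bt \<otimes> bt) \<cdot> dB"
begin

definition "fm = phi \<cdot> p \<cdot> bt"
definition "gm = (eC \<otimes> IB) \<cdot> i \<cdot> phi'"
lemma fm_ty[simp]: "fm \<in> Arr M" "Dom M fm = Bo" "Cod M fm = Do" by (simp_all add: fm_def)
lemma gm_ty[simp]: "gm \<in> Arr M" "Dom M gm = Do" "Cod M gm = Bo" by (simp_all add: gm_def)

lemma Ni: "N \<cdot> i = i"
proof -
  have "N \<cdot> i = i \<cdot> p \<cdot> i" using ip pre[OF ip, of i] by simp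
  then show ?thesis using pi by simp
qed
lemma ups_ty[simp]: "ups \<in> Arr M" "Dom M ups = Co \<odot> Bo" "Cod M ups = K" by (simp_all add: upsdef)
lemma Niphi: "N \<cdot> i \<cdot> phi' = i \<cdot> phi'" using pre[OF Ni, of phi'] by simp
lemma ipbt: "i \<cdot> p \<cdot> bt = bt" using pre[OF ip, of bt] N_bt by simp

lemma G2: "fm \<cdot> m = mD \<cdot> (fm \<otimes> fm)"
proof -
  have "fm \<otimes> fm = (phi \<otimes> phi) \<cdot> ((p \<cdot> bt) \<otimes> (p \<cdot> bt))" unfolding fm_def by (simp add: inter)
  then have "mD \<cdot> (fm \<otimes> fm) = phi \<cdot> p \<cdot> mucp \<cdot> (i \<otimes> i) \<cdot> ((p \<cdot> bt) \<otimes> (p \<cdot> bt))"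
    using pre[OF algm[symmetric], of "(p \<cdot> bt) \<otimes> (p \<cdot> bt)"] by simp
  also have "... = phi \<cdot> p \<cdot> mucp \<cdot> (bt \<otimes> bt)" using ipbt by (simp add: inter_rev)
  also have "... = phi \<cdot> p \<cdot> bt \<cdot> m" using F6[of bt] N_bt bt_m by simp
  finally show ?thesis unfolding fm_def by simp
qed

lemma G3: "fm \<cdot> u = uD" unfolding fm_def using bt_u algu by simp

lemma G4: "dD \<cdot> fm = (fm \<otimes> fm) \<cdot> dB"
proof -
  have "dD \<cdot> fm = (phi \<otimes> phi) \<cdot> (p \<otimes> p) \<cdot> dcp \<cdot> i \<cdot> p \<cdot> bt"
    unfolding fm_def using pre[OF coalgd, of "p \<cdot> bt"] by simp
  also have "... = (phi \<otimes> phi) \<cdot> (p \<otimes> p) \<cdot> (bt \<otimes> bt) \<cdot> dB" using ipbt hypd by simp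
  also have "... = (fm \<otimes> fm) \<cdot> dB" unfolding fm_def by (simp add: inter)
  finally show ?thesis .
qed

lemma eCeB: "eC \<otimes> eB = eB \<cdot> (eC \<otimes> IB)" using slide2[of eC eB] by simp

lemma G5: "eD \<cdot> fm = eB"
proof -
  have "eD \<cdot> fm = ups \<cdot> bt" unfolding fm_def using pre[OF coalge, of "p \<cdot> bt"] ipbt by simp
  also have "... = eB" unfolding upsdef eCeB using N_bt eC_bt by simp
  finally show ?thesis .
qed

lemma gphi: "gm \<cdot> phi = (eC \<otimes> IB) \<cdot> i" unfolding gm_def using phi'phi by simp
lemma dDphi: "dD = (phi \<otimes> phi) \<cdot> (p \<otimes> p) \<cdot> dcp \<cdot> i \<cdot> phi'"
proof -
  have "dD = dD \<cdot> phi \<cdot> phi'" using phiphi' by simp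
  then show ?thesis using pre[OF coalgd, of phi'] by simp
qed

lemma G7: "dB \<cdot> gm = (gm \<otimes> gm) \<cdot> dD"
proof -
  have 1: "(gm \<otimes> gm) \<cdot> (phi \<otimes> phi) = ((eC \<otimes> IB) \<cdot> i) \<otimes> ((eC \<otimes> IB) \<cdot> i)" using gphi by (simp add: inter_rev)
  have 2: "(((eC \<otimes> IB) \<cdot> i) \<otimes> ((eC \<otimes> IB) \<cdot> i)) \<cdot> (p \<otimes> p) = G \<otimes> G"
    using ip GN by (simp add: inter_rev)
  have "(gm \<otimes> gm) \<cdot> dD = (G \<otimes> G) \<cdot> dcp \<cdot> i \<cdot> phi'"
    unfolding dDphi using pre[OF 1, of "(p \<otimes> p) \<cdot> dcp \<cdot> i \<cdot> phi'"] pre[OF 2, of "dcp \<cdot> i \<cdot> phi'"] by simp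
  also have "... = dB \<cdot> G \<cdot> i \<cdot> phi'" using pre[OF F9, of "i \<cdot> phi'"] by simp
  also have "... = dB \<cdot> gm" unfolding gm_def GN[symmetric] using Niphi by simp
  finally show ?thesis by simp
qed

lemma G8: "eB \<cdot> gm = eD"
proof -
  have "eB \<cdot> gm = ups \<cdot> i \<cdot> phi'" unfolding gm_def upsdef using eCeB Niphi by simp
  also have "... = eD \<cdot> phi \<cdot> phi'" using pre[OF coalge, of phi'] by simp
  also have "... = eD" using phiphi' by simp
  finally show ?thesis .
qed

lemma G9: "gm \<cdot> fm = IB"
proof -
  have "gm \<cdot> fm = (eC \<otimes> IB) \<cdot> i \<cdot> p \<cdot> bt" unfolding fm_def using pre[OF gphi, of "p \<cdot> bt"] by simp
  then show ?thesis using ipbt eC_bt by simp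
qed

lemma G10: "gm \<cdot> mD \<cdot> (idm Do \<otimes> fm) = m \<cdot> (gm \<otimes> IB)"
proof -
  have 1: "idm Do \<otimes> fm = (phi \<otimes> phi) \<cdot> (phi' \<otimes> (p \<cdot> bt))" unfolding fm_def using phiphi' by (simp add: inter_rev)
  have Nx: "N \<cdot> i \<cdot> phi' = i \<cdot> phi'" using pre[OF Ni, of phi'] by simp
  have "mD \<cdot> (idm Do \<otimes> fm) = phi \<cdot> p \<cdot> mucp \<cdot> (i \<otimes> i) \<cdot> (phi' \<otimes> (p \<cdot> bt))"
    unfolding 1 using pre[OF algm[symmetric], of "phi' \<otimes> (p \<cdot> bt)"] by simp
  also have "... = phi \<cdot> p \<cdot> mucp \<cdot> ((i \<cdot> phi') \<otimes> bt)" using ipbt by (simp add: inter_rev)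
  also have "... = phi \<cdot> p \<cdot> (IC \<otimes> m) \<cdot> ((i \<cdot> phi') \<otimes> IB)" using F6[of "i \<cdot> phi'"] Nx by simp
  finally have 2: "mD \<cdot> (idm Do \<otimes> fm) = phi \<cdot> p \<cdot> (IC \<otimes> m) \<cdot> ((i \<cdot> phi') \<otimes> IB)" .
  have "gm \<cdot> mD \<cdot> (idm Do \<otimes> fm) = (eC \<otimes> IB) \<cdot> N \<cdot> (IC \<otimes> m) \<cdot> ((i \<cdot> phi') \<otimes> IB)"
    using 2 pre[OF gphi, of "p \<cdot> (IC \<otimes> m) \<cdot> ((i \<cdot> phi') \<otimes> IB)"] pre[OF ip, of "(IC \<otimes> m) \<cdot> ((i \<cdot> phi') \<otimes> IB)"] by simp
  also have "... = (eC \<otimes> IB) \<cdot> (IC \<otimes> m) \<cdot> ((i \<cdot> phi') \<otimes> IB)"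
    using pre[OF N_m, of "(i \<cdot> phi') \<otimes> IB"] Nx by (simp add: inter_rev)
  also have "... = m \<cdot> (gm \<otimes> IB)" unfolding gm_def using pre[OF E, of "(i \<cdot> phi') \<otimes> IB"] by (simp add: inter_rev)
  finally show ?thesis .
qed

end


theorem theorem3p12:
  fixes M :: "('o,'m) bcat"
    and D C B :: "('o,'m) stru"
    and lam psi sigma chi tau nu ups :: 'm
  assumes "bc.sbmc M"
    and "bc.weak_bialgebra M D"
    and "bc.coalgebra M C"
    and "bc.weak_hopf M B lam"
    and "bc.weak_crossed_biproduct M D C B psi sigma chi tau nu ups"
    and "Comp M (bc.delta_cp M C (carr B) chi tau) (bc.beta M B (carr C) nu)
         = Comp M (Ten M (bc.beta M B (carr C) nu) (bc.beta M B (carr C) nu)) (dlt B)"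
    and "tau = Comp M (Ten M (eps C) (dlt B)) (bc.nabla M B (carr C) psi)"
    and "ups = Comp M (Ten M (eps C) (eps B)) (bc.nabla M B (carr C) psi)"
  shows "\<exists>f g. bc.weak_projection M D B lam f g"
proof -
  interpret sb M using assms(1) by unfold_locales
  have wbB: "weak_bialgebra B" using assms(4) unfolding weak_hopf_def by simp
  have algB: "algebra B" and coalgB: "coalgebra B" using wbB unfolding weak_bialgebra_def by auto
  have algD: "algebra D" and coalgD: "coalgebra D" using assms(2) unfolding weak_bialgebra_def by auto
  have wcb: "weak_crossed_product B (carr C) psi sigma nu" "weak_crossed_coproduct C (carr B) chi tau ups"
    "nabla B (carr C) psi = gamma C (carr B) chi"
    "(eps C \<otimes> idm (carr B)) \<cdot> nu = eta B"
    using assms(5) unfolding weak_crossed_biproduct_def by auto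
  obtain X i p phi phi' where Xs: "X \<in> Obj M" "hom i X (carr C \<odot> carr B)" "hom p (carr C \<odot> carr B) X"
        "p \<cdot> i = idm X" "i \<cdot> p = nabla B (carr C) psi"
        "hom phi' (carr D) X" "phi \<cdot> phi' = idm (carr D)" "phi' \<cdot> phi = idm X"
     and mor: "(let P = \<lparr>carr = X,
                  mu = p \<cdot> mu_cp B (carr C) psi sigma \<cdot> (i \<otimes> i),
                  eta = p \<cdot> nu,
                  dlt = (p \<otimes> p) \<cdot> delta_cp C (carr B) chi tau \<cdot> i,
                  eps = ups \<cdot> i\<rparr>
         in alg_mor P D phi \<and> coalg_mor P D phi)"
    using assms(5) unfolding weak_crossed_biproduct_def by blast
  have mor': "hom phi X (carr D)" "phi \<cdot> (p \<cdot> mu_cp B (carr C) psi sigma \<cdot> (i \<otimes> i)) = mu D \<cdot> (phi \<otimes> phi)"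
     "phi \<cdot> (p \<cdot> nu) = eta D" "dlt D \<cdot> phi = (phi \<otimes> phi) \<cdot> ((p \<otimes> p) \<cdot> delta_cp C (carr B) chi tau \<cdot> i)"
     "eps D \<cdot> phi = ups \<cdot> i"
    using mor unfolding alg_mor_def coalg_mor_def Let_def by auto
  note A1 = algB[unfolded algebra_def Let_def hom_def]
  note A2 = coalgB[unfolded coalgebra_def Let_def hom_def]
  note A3 = assms(3)[unfolded coalgebra_def Let_def hom_def]
  note A4 = algD[unfolded algebra_def Let_def hom_def]
  note A5 = coalgD[unfolded coalgebra_def Let_def hom_def]
  note A6 = wcb(1)[unfolded weak_crossed_product_def Let_def hom_def beta_def]
  note A7 = wcb(2)[unfolded weak_crossed_coproduct_def Let_def hom_def]
  have "tau \<cdot> gamma C (carr B) chi = tau" using wcb(2) unfolding weak_crossed_coproduct_def Let_def by blast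
  then have tauN: "tau \<cdot> nabla B (carr C) psi = tau" by (simp add: wcb(3))
  interpret c1: ctx M "carr B" "carr C" "mu B" "eta B" "dlt B" "eps B" "dlt C" "eps C" psi sigma chi tau nu
    apply unfold_locales
    apply (insert assms(1) A1 A2 A3 A6 A7 wcb(4))
    apply (unfold hom_def nabla_def)
    apply (blast+)
    done
  interpret c2: ctx2 M "carr B" "carr C" "mu B" "eta B" "dlt B" "eps B" "dlt C" "eps C" psi sigma chi tau nu
    apply unfold_locales
    apply (insert A1 A2 A3 A7 wcb(3) wcb(3)[symmetric] tauN)
    apply (unfold hom_def c1.N_def nabla_def gamma_def)
    apply (blast+)
    apply (rule assms(7)[unfolded nabla_def])
    done
  interpret c: ctx3 M "carr B" "carr C" "mu B" "eta B" "dlt B" "eps B" "dlt C" "eps C" psi sigma chi tau nu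
     "carr D" X "mu D" "eta D" "dlt D" "eps D" i p phi phi' ups
    apply unfold_locales
    apply (insert A4 A5 Xs mor' wcb(3,4) assms(6,8))
    apply (unfold hom_def c1.N_def c1.bt_def c1.mucp_def c2.dcp_def nabla_def beta_def mu_cp_def delta_cp_def)
    apply (blast+)
    done
  have "weak_projection D B lam c.fm c.gm"
    unfolding weak_projection_def alg_mor_def coalg_mor_def hom_def
    using assms(2) assms(4) c.G2 c.G3 c.G4 c.G5 c.G7 c.G8 c.G9 c.G10 c.fm_ty c.gm_ty by blast
  then show ?thesis by blast
qed

end
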